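(* Let $f \in L^\infty([-\pi,\pi])$ have real Fourier coefficients, and suppose there is $\delta>0$ with $\delta \le |f(\theta)|$ for all $\theta\in[-\pi,\pi]$. Let $\widetilde f := f/|f|$. For each $n$: <ul> <li>let $A_n(f)$, $A_n(\widetilde f)$ and $A_M := A_n(|f|)$ be the $n\times n$ Toeplitz matrices generated by $f$, $\widetilde f$ and $|f|$ respectively;</li> <li>let $Y_n$ be the $n\times n$ exchange matrix;</li> <li>define $E_n$ by \[A_M^{-1} Y_n A_n(f) = Y_n A_n(\widetilde f) + E_n.\]</li> </ul> Then $\|E_n\|_2 = o(n)$ as $n\to\infty$. Moreover, for every $n$ all eigenvalues of the symmetric matrix $Y_n A_n(\widetilde f)$ lie in $[-1,1]$.
   Context: For $g\in L^1([-\pi,\pi])$, $A_n(g)$ denotes the $n\times n$ Toeplitz matrix whose $(i,j)$ entry is $\frac{1}{2\pi}\int_{-\pi}^{\pi} g(\theta)e^{-\mathrm{i}(i-j)\theta}\,d\theta$. The exchange matrix $Y_n$ has $(Y_n)_{ij}=1$ if $i+j=n+1$ and $0$ otherwise. $\|\cdot\|_2$ is the spectral norm. *)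

theory Defs
  imports "HOL-Analysis.Analysis" "HOL-Library.Landau_Symbols"
    "Jordan_Normal_Form.Matrix" "Jordan_Normal_Form.Char_Poly"
    "Jordan_Normal_Form.Gauss_Jordan_Elimination"
begin

definition fourier_coeff :: "(real \<Rightarrow> complex) \<Rightarrow> int \<Rightarrow> complex" where
  "fourier_coeff g k =
     complex_of_real (1 / (2 * pi)) *
     (LINT t:{-pi..pi}|lborel. g t * exp (- (\<i> * of_int k * complex_of_real t)))"

definition toeplitz :: "nat \<Rightarrow> (real \<Rightarrow> complex) \<Rightarrow> complex mat" where
  "toeplitz n g = mat n n (\<lambda>(i, j). fourier_coeff g (int i - int j))"

definition exchange :: "nat \<Rightarrow> complex mat" where
  "exchange n = mat n n (\<lambda>(i, j). if i + j + 1 = n then 1 else 0)"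

definition vnorm :: "complex vec \<Rightarrow> real" where
  "vnorm x = sqrt (\<Sum>i<dim_vec x. (cmod (x $ i))\<^sup>2)"

definition spec_norm :: "complex mat \<Rightarrow> real" where
  "spec_norm A = Sup {vnorm (A *\<^sub>v x) | x. x \<in> carrier_vec (dim_col A) \<and> vnorm x \<le> 1}"

end

theory Submission
  imports Defs
begin


definition ee :: "int \<Rightarrow> real \<Rightarrow> complex" where
  "ee m t = exp (\<i> * of_int m * of_real t)"

lemma ee_mult: "ee k t * ee m t = ee (k + m) t"
  unfolding ee_def by (simp add: exp_add[symmetric] algebra_simps)

lemma ee_0[simp]: "ee 0 t = 1" by (simp add: ee_def)

lemma cont_ee: "continuous_on UNIV (ee m)"
  unfolding ee_def by (intro continuous_intros)

lemma norm_ee[simp]: "norm (ee m t) = 1"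
  unfolding ee_def by (metis mult.assoc mult.commute norm_exp_i_times of_real_of_int_eq of_real_mult)

lemma xs_expand: "complex_of_real ((1 + cos (t - s)) / 2)
   = 1/2 + (exp (- \<i> * of_real s) / 4) * ee 1 t + (exp (\<i> * of_real s) / 4) * ee (-1) t"
proof -
  have "complex_of_real (cos (t - s)) = cos (of_real (t - s))" by (rule cos_of_real[symmetric])
  also have "\<dots> = (exp (\<i> * of_real (t-s)) + exp (-(\<i> * of_real (t-s)))) / 2"
    by (simp add: cos_exp_eq)
  also have "exp (\<i> * of_real (t-s)) = exp (- \<i> * of_real s) * ee 1 t"
    by (simp add: ee_def exp_add[symmetric] algebra_simps)
  also have "exp (-(\<i> * of_real (t-s))) = exp (\<i> * of_real s) * ee (-1) t"
    by (simp add: ee_def exp_add[symmetric] algebra_simps)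
  finally have H: "complex_of_real (cos (t - s)) = (exp (- \<i> * of_real s) * ee 1 t + exp (\<i> * of_real s) * ee (-1) t) / 2" .
  show ?thesis by (subst of_real_divide, subst of_real_add, subst H) (simp add: field_simps)
qed

lemma cos_gt_iff:
  assumes "0 < b" "b \<le> pi" "-2*pi + b \<le> d" "d \<le> 2*pi - b"
  shows "cos b < cos d \<longleftrightarrow> \<bar>d\<bar> < b"
proof -
  define e where "e = \<bar>d\<bar>"
  have cd: "cos d = cos e" unfolding e_def by (cases "0 \<le> d") (simp_all only: abs_of_nonneg abs_of_neg not_le cos_minus)
  have e0: "0 \<le> e" unfolding e_def by simp
  have e2: "e \<le> 2*pi - b" unfolding e_def abs_le_iff using assms(3,4) by (intro conjI; linarith)
  show ?thesis
  proof
    assume "\<bar>d\<bar> < b"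
    then have "e < b" unfolding e_def .
    then have "cos b < cos e" using cos_monotone_0_pi[of e b] assms(2) e0 by blast
    then show "cos b < cos d" using cd by simp
  next
    assume lt: "cos b < cos d"
    show "\<bar>d\<bar> < b"
    proof (rule ccontr)
      assume "\<not> \<bar>d\<bar> < b"
      then have ge: "b \<le> e" unfolding e_def by simp
      show False
      proof (cases "e \<le> pi")
        case True
        then have "cos e \<le> cos b" using cos_monotone_0_pi_le[of b e] assms(1) ge by linarith
        then show False using lt cd by linarith
      next
        case False
        have c2: "cos (2*pi - e) = cos e" by (rule cos_2pi_minus)
        have "cos (2*pi - e) \<le> cos b"
          using cos_monotone_0_pi_le[of b "2*pi - e"] assms(1) False e2 by linarith
        then show False using lt cd c2 by linarith
      qed
    qed
  qed
qed

locale uctx =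
  fixes u :: "real \<Rightarrow> complex"
  assumes um[measurable]: "u \<in> borel_measurable lborel"
    and ui: "integrable lborel u"
    and uz: "\<And>t. t \<notin> {-pi<..<pi} \<Longrightarrow> u t = 0"
    and uc: "\<And>m. integral\<^sup>L lborel (\<lambda>t. u t * ee m t) = 0"
begin

lemma int_cont:
  assumes h: "continuous_on UNIV h"
  shows "integrable lborel (\<lambda>t. u t * h t)"
proof -
  have "compact (h ` {-pi..pi})" by (intro compact_continuous_image continuous_on_subset[OF h]) auto
  then obtain C where C: "\<And>t. t \<in> {-pi..pi} \<Longrightarrow> norm (h t) \<le> C"
    using compact_imp_bounded bounded_iff by (metis image_eqI)
  have hm[measurable]: "h \<in> borel_measurable lborel"
    using borel_measurable_continuous_onI[OF h] by simp
  show ?thesis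
  proof (rule Bochner_Integration.integrable_bound[where f="\<lambda>t. of_real C * u t"])
    show "integrable lborel (\<lambda>t. complex_of_real C * u t)" using ui by simp
    show "(\<lambda>t. u t * h t) \<in> borel_measurable lborel" by measurable
    show "AE x in lborel. norm (u x * h x) \<le> norm (complex_of_real C * u x)"
    proof (rule AE_I2)
      fix t
      show "norm (u t * h t) \<le> norm (complex_of_real C * u t)"
      proof (cases "t \<in> {-pi<..<pi}")
        case True
        then have "norm (h t) \<le> C" using C by auto
        then have "norm (h t) \<le> \<bar>C\<bar>" by linarith
        then show ?thesis by (simp add: norm_mult mult.commute mult_right_mono)
      next
        case False then show ?thesis using uz by simp
      qed
    qed
  qed
qed

definition K :: "(real \<Rightarrow> complex) \<Rightarrow> bool" where
  "K h \<longleftrightarrow> continuous_on UNIV h \<and> (\<forall>m. integral\<^sup>L lborel (\<lambda>t. u t * h t * ee m t) = 0)"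

lemma K_one: "K (\<lambda>t. 1)"
  unfolding K_def using uc by simp

lemma int_K: "K h \<Longrightarrow> integrable lborel (\<lambda>t. u t * h t * ee m t)"
  unfolding K_def using int_cont[of "\<lambda>t. h t * ee m t"] cont_ee
  by (auto simp: mult.assoc intro!: continuous_on_mult)

lemma K_add: "K h \<Longrightarrow> K g \<Longrightarrow> K (\<lambda>t. h t + g t)"
proof -
  assume a: "K h" "K g"
  have "integral\<^sup>L lborel (\<lambda>t. u t * (h t + g t) * ee m t) = 0" for m
  proof -
    have "integral\<^sup>L lborel (\<lambda>t. u t * (h t + g t) * ee m t)
       = integral\<^sup>L lborel (\<lambda>t. u t * h t * ee m t + u t * g t * ee m t)"
      by (simp add: algebra_simps)
    also have "\<dots> = 0" using a int_K[OF a(1)] int_K[OF a(2)] unfolding K_def by simp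
    finally show ?thesis .
  qed
  then show ?thesis using a unfolding K_def by (auto intro: continuous_on_add)
qed

lemma K_scale: "K h \<Longrightarrow> K (\<lambda>t. c * h t)"
proof -
  assume a: "K h"
  have "integral\<^sup>L lborel (\<lambda>t. u t * (c * h t) * ee m t) = 0" for m
  proof -
    have "integral\<^sup>L lborel (\<lambda>t. u t * (c * h t) * ee m t)
       = integral\<^sup>L lborel (\<lambda>t. c * (u t * h t * ee m t))"
      by (simp add: algebra_simps)
    also have "\<dots> = 0" using a unfolding K_def by simp
    finally show ?thesis .
  qed
  then show ?thesis using a unfolding K_def by (auto intro: continuous_on_mult continuous_on_const)
qed

lemma K_sum: "(\<And>i. i \<in> I \<Longrightarrow> K (h i)) \<Longrightarrow> K (\<lambda>t. \<Sum>i\<in>I. h i t)"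
proof (induction I rule: infinite_finite_induct)
  case (infinite A)
  then show ?case using K_scale[OF K_one, of 0] by simp
next
  case empty
  then show ?case using K_scale[OF K_one, of 0] by simp
next
  case (insert x F)
  then show ?case by (simp add: K_add)
qed

lemma K_ee: "K h \<Longrightarrow> K (\<lambda>t. h t * ee k t)"
proof -
  assume a: "K h"
  have "integral\<^sup>L lborel (\<lambda>t. u t * (h t * ee k t) * ee m t) = 0" for m
  proof -
    have "integral\<^sup>L lborel (\<lambda>t. u t * (h t * ee k t) * ee m t)
       = integral\<^sup>L lborel (\<lambda>t. u t * h t * ee (k + m) t)"
      by (simp add: mult.assoc ee_mult)
    also have "\<dots> = 0" using a unfolding K_def by simp
    finally show ?thesis .
  qed
  then show ?thesis using a cont_ee unfolding K_def by (auto intro: continuous_on_mult)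
qed

lemma K_x: "K h \<Longrightarrow> K (\<lambda>t. h t * complex_of_real ((1 + cos (t - s)) / 2))"
proof -
  assume a: "K h"
  have "K (\<lambda>t. (1/2) * h t + ((exp (- \<i> * of_real s) / 4) * (h t * ee 1 t)
          + (exp (\<i> * of_real s) / 4) * (h t * ee (-1) t)))"
    by (intro K_add K_scale K_ee a)
  moreover have "(\<lambda>t. (1/2) * h t + ((exp (- \<i> * of_real s) / 4) * (h t * ee 1 t)
          + (exp (\<i> * of_real s) / 4) * (h t * ee (-1) t)))
     = (\<lambda>t. h t * complex_of_real ((1 + cos (t - s)) / 2))"
    by (rule ext, subst xs_expand) (simp add: algebra_simps)
  ultimately show ?thesis by simp
qed

lemma K_1x: "K h \<Longrightarrow> K (\<lambda>t. h t * complex_of_real (1 - (1 + cos (t - s)) / 2))"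
proof -
  assume a: "K h"
  have "K (\<lambda>t. h t + (-1) * (h t * complex_of_real ((1 + cos (t - s)) / 2)))"
    by (intro K_add K_scale K_x a)
  moreover have "(\<lambda>t. h t + (-1) * (h t * complex_of_real ((1 + cos (t - s)) / 2)))
     = (\<lambda>t. h t * complex_of_real (1 - (1 + cos (t - s)) / 2))"
    by (rule ext) (simp add: right_diff_distrib)
  ultimately show ?thesis by simp
qed

lemma K_pow: "K (\<lambda>t. complex_of_real (((1 + cos (t - s)) / 2) ^ a * (1 - (1 + cos (t - s)) / 2) ^ b))"
proof -
  have A: "K (\<lambda>t. complex_of_real (((1 + cos (t - s)) / 2) ^ a))" for a
  proof (induction a)
    case 0 then show ?case using K_one by simp
  next
    case (Suc a) then show ?case using K_x[OF Suc, of s] by (simp add: mult.commute)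
  qed
  show ?thesis
  proof (induction b)
    case 0 then show ?case using A by simp
  next
    case (Suc b) then show ?case using K_1x[OF Suc, of s] by (simp add: ac_simps)
  qed
qed

lemma K_bern: "K (\<lambda>t. complex_of_real (\<Sum>k\<le>n. c k * Bernstein n k ((1 + cos (t - s)) / 2)))"
proof -
  have "K (\<lambda>t. \<Sum>k\<le>n. complex_of_real (c k * real (n choose k)) *
     complex_of_real (((1 + cos (t - s)) / 2) ^ k * (1 - (1 + cos (t - s)) / 2) ^ (n - k)))"
    by (intro K_sum K_scale K_pow)
  then show ?thesis unfolding Bernstein_def by (simp add: mult.assoc)
qed


lemma K_limit: "integral\<^sup>L lborel (\<lambda>t. u t * (if c < (1 + cos (t - s)) / 2 then 1 else 0)) = 0"
proof -
  define X where "X t = (1 + cos (t - s)) / 2" for t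
  have X01: "X t \<in> {0..1}" for t unfolding X_def using cos_ge_minus_one[of "t-s"] cos_le_one[of "t-s"] by (auto simp del: cos_ge_minus_one)
  have Xc: "continuous_on UNIV X" unfolding X_def by (intro continuous_intros) auto
  define \<phi> where "\<phi> m y = min 1 (max 0 (real (Suc m) * (y - c)))" for m y
  have c\<phi>: "continuous_on {0..1} (\<phi> m)" for m unfolding \<phi>_def by (intro continuous_intros)
  have "\<forall>m. \<exists>N. \<forall>x\<in>{0..1}. \<bar>\<phi> m x - (\<Sum>k\<le>N. \<phi> m (real k / real N) * Bernstein N k x)\<bar> < inverse (real (Suc m))"
  proof
    fix m
    obtain N0 where H: "\<forall>n x. N0 \<le> n \<and> x \<in> {0..1} \<longrightarrow> \<bar>\<phi> m x - (\<Sum>k\<le>n. \<phi> m (real k / real n) * Bernstein n k x)\<bar> < inverse (real (Suc m))"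
      using Bernstein_Weierstrass[OF c\<phi>[of m], of "inverse (real (Suc m))"] by auto
    show "\<exists>N. \<forall>x\<in>{0..1}. \<bar>\<phi> m x - (\<Sum>k\<le>N. \<phi> m (real k / real N) * Bernstein N k x)\<bar> < inverse (real (Suc m))"
      using H by (intro exI[of _ N0] ballI) blast
  qed
  then obtain N where N: "\<And>m x. x \<in> {0..1} \<Longrightarrow> \<bar>\<phi> m x - (\<Sum>k\<le>N m. \<phi> m (real k / real (N m)) * Bernstein (N m) k x)\<bar> < inverse (real (Suc m))"
    by metis
  define P where "P m x = (\<Sum>k\<le>N m. \<phi> m (real k / real (N m)) * Bernstein (N m) k x)" for m x
  define hm where "hm m t = complex_of_real (P m (X t))" for m t
  have Khm: "K (hm m)" for m
    unfolding hm_def P_def X_def by (rule K_bern)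
  have z: "integral\<^sup>L lborel (\<lambda>t. u t * hm m t) = 0" for m
  proof -
    have "integral\<^sup>L lborel (\<lambda>t. u t * hm m t * ee 0 t) = 0" using Khm[of m] unfolding K_def by blast
    then show ?thesis by simp
  qed
  have hmc: "continuous_on UNIV (hm m)" for m using Khm[of m] unfolding K_def by simp
  have hmm[measurable]: "hm m \<in> borel_measurable lborel" for m
    using borel_measurable_continuous_onI[OF hmc[of m]] by simp
  have Xm[measurable]: "X \<in> borel_measurable lborel" using borel_measurable_continuous_onI[OF Xc] by simp
  have conv: "(\<lambda>m. u t * hm m t) \<longlonglongrightarrow> u t * (if c < X t then 1 else 0)" for t
  proof -
    have phi_conv: "(\<lambda>m. \<phi> m (X t)) \<longlonglongrightarrow> (if c < X t then 1 else 0)"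
    proof (cases "c < X t")
      case True
      obtain M :: nat where M: "inverse (X t - c) < real M" using reals_Archimedean2 by blast
      have "\<phi> m (X t) = 1" if "m \<ge> M" for m
      proof -
        have "1 < real M * (X t - c)" using M True by (simp add: field_simps)
        also have "\<dots> \<le> real (Suc m) * (X t - c)" using that True by (intro mult_right_mono) auto
        finally show ?thesis unfolding \<phi>_def by simp
      qed
      then have "eventually (\<lambda>m. \<phi> m (X t) = 1) sequentially" by (auto simp: eventually_sequentially)
      then show ?thesis using True by (simp add: tendsto_eventually)
    next
      case False
      then have "\<phi> m (X t) = 0" for m unfolding \<phi>_def by (simp add: mult_nonneg_nonpos)
      then show ?thesis using False by simp
    qed
    have d0: "(\<lambda>m. P m (X t) - \<phi> m (X t)) \<longlonglongrightarrow> 0"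
    proof (rule Lim_null_comparison[OF _ LIMSEQ_inverse_real_of_nat])
      show "\<forall>\<^sub>F m in sequentially. norm (P m (X t) - \<phi> m (X t)) \<le> inverse (real (Suc m))"
        using N[OF X01[of t]] unfolding P_def by (intro always_eventually allI) (simp add: abs_minus_commute less_imp_le)
    qed
    have "(\<lambda>m. \<phi> m (X t) + (P m (X t) - \<phi> m (X t))) \<longlonglongrightarrow> (if c < X t then 1 else 0) + 0"
      by (intro tendsto_add phi_conv d0)
    then have "(\<lambda>m. P m (X t)) \<longlonglongrightarrow> (if c < X t then 1 else 0)" by simp
    then have "(\<lambda>m. hm m t) \<longlonglongrightarrow> complex_of_real (if c < X t then 1 else 0)"
      unfolding hm_def by (intro tendsto_of_real)
    moreover have "complex_of_real (if c < X t then 1 else 0) = (if c < X t then 1 else 0)"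
      by (cases "c < X t") (simp_all only: if_True if_False of_real_1 of_real_0)
    ultimately have "(\<lambda>m. hm m t) \<longlonglongrightarrow> (if c < X t then 1 else 0)" by simp
    then show ?thesis by (intro tendsto_mult tendsto_const)
  qed
  have bnd: "norm (u t * hm m t) \<le> 2 * norm (u t)" for m t
  proof -
    have "\<bar>\<phi> m (X t)\<bar> \<le> 1" unfolding \<phi>_def by simp
    moreover have "\<bar>\<phi> m (X t) - P m (X t)\<bar> < inverse (real (Suc m))" using N[OF X01[of t]] unfolding P_def by simp
    moreover have "inverse (real (Suc m)) \<le> 1" by (simp add: inverse_le_1_iff)
    ultimately have "\<bar>P m (X t)\<bar> \<le> 2" by linarith
    then have "norm (hm m t) \<le> 2" unfolding hm_def by simp
    then have "norm (u t) * norm (hm m t) \<le> norm (u t) * 2" by (intro mult_left_mono) auto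
    then show ?thesis by (simp add: norm_mult mult.commute)
  qed
  have "(\<lambda>m. integral\<^sup>L lborel (\<lambda>t. u t * hm m t)) \<longlonglongrightarrow> integral\<^sup>L lborel (\<lambda>t. u t * (if c < X t then 1 else 0))"
  proof (rule integral_dominated_convergence[where w="\<lambda>t. 2 * norm (u t)"])
    show "(\<lambda>t. u t * (if c < X t then 1 else 0)) \<in> borel_measurable lborel" by measurable
    show "(\<lambda>t. u t * hm i t) \<in> borel_measurable lborel" for i by measurable
    show "integrable lborel (\<lambda>t. 2 * norm (u t))" using ui by simp
    show "AE t in lborel. (\<lambda>i. u t * hm i t) \<longlonglongrightarrow> u t * (if c < X t then 1 else 0)"
      using conv by simp
    show "AE t in lborel. norm (u t * hm i t) \<le> 2 * norm (u t)" for i using bnd by simp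
  qed
  then have "integral\<^sup>L lborel (\<lambda>t. u t * (if c < X t then 1 else 0)) = 0"
    using z by (simp add: LIMSEQ_const_iff)
  then show ?thesis unfolding X_def .
qed


lemma interval_zero:
  assumes "-pi \<le> \<alpha>" "\<alpha> < \<beta>" "\<beta> \<le> pi"
  shows "set_lebesgue_integral lborel {\<alpha><..<\<beta>} u = 0"
proof -
  define s where "s = (\<alpha> + \<beta>) / 2"
  define b where "b = (\<beta> - \<alpha>) / 2"
  define c where "c = (1 + cos b) / 2"
  have s2: "2 * s = \<alpha> + \<beta>" "2 * b = \<beta> - \<alpha>" by (simp_all add: s_def b_def)
  have sb: "s + b = \<beta>" "s - b = \<alpha>" using s2 by linarith+
  have eq: "u t * (if c < (1 + cos (t - s)) / 2 then 1 else 0) = indicator {\<alpha><..<\<beta>} t *\<^sub>R u t" for t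
  proof (cases "t \<in> {-pi<..<pi}")
    case True
    have "c < (1 + cos (t - s)) / 2 \<longleftrightarrow> cos b < cos (t - s)" unfolding c_def by (simp add: field_simps)
    also have "\<dots> \<longleftrightarrow> \<bar>t - s\<bar> < b"
      using True assms s2 pi_gt_zero unfolding greaterThanLessThan_iff by (intro cos_gt_iff; linarith)
    also have "\<dots> \<longleftrightarrow> t \<in> {\<alpha><..<\<beta>}" using sb unfolding greaterThanLessThan_iff abs_less_iff
      by (intro iffI conjI; elim conjE; linarith)
    finally have "c < (1 + cos (t - s)) / 2 \<longleftrightarrow> t \<in> {\<alpha><..<\<beta>}" .
    then show ?thesis unfolding indicator_def by simp
  next
    case False then show ?thesis using uz[OF False] by simp
  qed
  have "set_lebesgue_integral lborel {\<alpha><..<\<beta>} u = integral\<^sup>L lborel (\<lambda>t. u t * (if c < (1 + cos (t - s)) / 2 then 1 else 0))"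
    unfolding set_lebesgue_integral_def eq ..
  also have "\<dots> = 0" by (rule K_limit)
  finally show ?thesis .
qed

lemma box_zero: "set_lebesgue_integral lborel {a<..<b} u = 0"
proof (cases "max a (-pi) < min b pi")
  case True
  have "set_lebesgue_integral lborel {a<..<b} u = set_lebesgue_integral lborel {max a (-pi)<..<min b pi} u"
    unfolding set_lebesgue_integral_def
  proof (rule Bochner_Integration.integral_cong[OF refl])
    fix t
    show "indicator {a<..<b} t *\<^sub>R u t = indicator {max a (-pi)<..<min b pi} t *\<^sub>R u t"
    proof (cases "t \<in> {-pi<..<pi}")
      case True then show ?thesis unfolding indicator_def by auto
    next
      case False then show ?thesis using uz[OF False] by simp
    qed
  qed
  also have "\<dots> = 0" using True by (intro interval_zero) auto
  finally show ?thesis .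
next
  case False
  have "(\<lambda>t. indicator {a<..<b} t *\<^sub>R u t) = (\<lambda>t. 0::complex)"
  proof (rule ext)
    fix t
    show "indicator {a<..<b} t *\<^sub>R u t = 0"
    proof (cases "t \<in> {-pi<..<pi}")
      case True then have "t \<notin> {a<..<b}" using False by auto
      then show ?thesis by simp
    next
      case False then show ?thesis using uz[OF False] by simp
    qed
  qed
  then show ?thesis by (simp add: set_lebesgue_integral_def)
qed

lemma u_AE_zero: "AE t in lborel. u t = 0"
proof (rule sigma_finite_measure.density_zero[OF sigma_finite_lborel ui])
  fix A :: "real set" assume A: "A \<in> sets lborel"
  let ?G = "range (\<lambda>(a, b). box a b :: real set)"
  have sb: "sets (borel::real measure) = sigma_sets UNIV ?G"
    by (subst borel_eq_box) (simp add: sets_measure_of)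
  have AG: "A \<in> sigma_sets UNIV ?G" using A sb by simp
  have IntS: "Int_stable ?G" unfolding Int_stable_def
  proof (intro ballI)
    fix X Y assume "X \<in> ?G" "Y \<in> ?G"
    then obtain a b c d where "X = box a b" "Y = box c d" by auto
    then have "X \<inter> Y = box (max a c) (min b d)" by (auto simp: box_real)
    then show "X \<inter> Y \<in> ?G" by auto
  qed
  show "set_lebesgue_integral lborel A u = 0"
  proof (rule sigma_sets_induct_disjoint[where P="\<lambda>A. set_lebesgue_integral lborel A u = 0", OF IntS _ AG])
    show "?G \<subseteq> Pow UNIV" by simp
  next
    fix A assume "A \<in> ?G"
    then obtain a b where "A = {a<..<b}" by (auto simp: box_real)
    then show "set_lebesgue_integral lborel A u = 0" using box_zero by simp
  next
    show "set_lebesgue_integral lborel {} u = 0" by (simp add: set_lebesgue_integral_def)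
  next
    fix A assume compl: "A \<in> sigma_sets UNIV ?G" "set_lebesgue_integral lborel A u = 0"
    then have Am: "A \<in> sets lborel" using sb by simp
    have "set_lebesgue_integral lborel (UNIV - A) u
        = integral\<^sup>L lborel (\<lambda>t. u t - indicator A t *\<^sub>R u t)"
      unfolding set_lebesgue_integral_def
      by (rule Bochner_Integration.integral_cong[OF refl]) (auto simp: indicator_def)
    also have "\<dots> = integral\<^sup>L lborel u - set_lebesgue_integral lborel A u"
      unfolding set_lebesgue_integral_def
      by (rule Bochner_Integration.integral_diff[OF ui integrable_mult_indicator[OF Am ui]])
    also have "integral\<^sup>L lborel u = 0" using uc[of 0] by simp
    finally show "set_lebesgue_integral lborel (UNIV - A) u = 0" using compl by simp
  next
    fix A :: "nat \<Rightarrow> real set"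
    assume union: "disjoint_family A" "range A \<subseteq> sigma_sets UNIV ?G" "\<And>i. set_lebesgue_integral lborel (A i) u = 0"
    then have Am: "\<And>i. A i \<in> sets lborel" using sb by auto
    have "set_lebesgue_integral lborel (\<Union> (range A)) u = (\<Sum>i. set_lebesgue_integral lborel (A i) u)"
    proof (rule lebesgue_integral_countable_add)
      show "A i \<inter> A j = {}" if "i \<noteq> j" for i j using union(1) that unfolding disjoint_family_on_def by auto
      show "set_integrable lborel (\<Union> (range A)) u"
        unfolding set_integrable_def using Am by (intro integrable_mult_indicator ui) auto
    qed (rule Am)
    then show "set_lebesgue_integral lborel (\<Union> (range A)) u = 0" using union by simp
  qed
qed

end


no_notation Finite_Cartesian_Product.vec_nth (infixl "$" 90)

abbreviation "S \<equiv> {-pi..pi::real}"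

lemma ee_neg: "ee k (-t) = ee (-k) t" by (simp add: ee_def)
lemma cnj_ee: "cnj (ee k t) = ee (-k) t" by (simp add: ee_def exp_cnj)
lemma ee_cis: "ee k t = cis (of_int k * t)" by (simp add: ee_def cis_conv_exp mult.assoc)
lemma ee_diff: "ee (k - m) t = ee k t * ee (-m) t" by (simp add: ee_mult)

lemma ee_pi: "ee k pi = ee k (-pi)"
proof -
  have "sin (real_of_int k * pi) = 0" by (simp add: sin_times_pi_eq_0)
  then show ?thesis by (simp add: ee_cis complex_eq_iff)
qed

lemma int_ee: "integral\<^sup>L lborel (\<lambda>t. indicator S t *\<^sub>R ee k t) = (if k = 0 then 2 * pi else 0)"
proof (cases "k = 0")
  case True
  then show ?thesis using set_integral_const[of S lborel 1]
    by (simp add: set_lebesgue_integral_def scaleR_conv_of_real)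
next
  case False
  have si: "set_integrable lborel S (ee k)"
    by (rule borel_integrable_atLeastAtMost') (intro continuous_on_subset[OF cont_ee] subset_UNIV)
  define F where "F t = ee k t / (\<i> * of_int k)" for t
  have "(ee k has_integral (F pi - F (-pi))) S"
  proof (rule fundamental_theorem_of_calculus)
    show "-pi \<le> pi" by simp
    fix t assume "t \<in> S"
    have "((\<lambda>z. exp (\<i> * of_int k * z) / (\<i> * of_int k)) has_field_derivative exp (\<i> * of_int k * of_real t)) (at (of_real t))"
      using False by (auto intro!: derivative_eq_intros)
    from has_vector_derivative_real_field[OF this]
    show "(F has_vector_derivative ee k t) (at t within S)"
      unfolding F_def ee_def .
  qed
  then have "integral S (ee k) = 0" using ee_pi by (simp add: F_def integral_unique)
  then show ?thesis using set_borel_integral_eq_integral(2)[OF si] False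
    by (simp add: set_lebesgue_integral_def)
qed

definition Gt :: "(real \<Rightarrow> complex) \<Rightarrow> real \<Rightarrow> complex" where
  "Gt g t = indicator S t *\<^sub>R g t"

definition good :: "(real \<Rightarrow> complex) \<Rightarrow> real \<Rightarrow> bool" where
  "good g B \<longleftrightarrow> Gt g \<in> borel_measurable lborel \<and> (AE t in lborel. t \<in> S \<longrightarrow> cmod (g t) \<le> B) \<and> 0 \<le> B"

definition Pv :: "complex vec \<Rightarrow> real \<Rightarrow> complex" where
  "Pv x t = (\<Sum>j<dim_vec x. x $ j * ee (int j) t)"

definition sqn :: "complex vec \<Rightarrow> real" where
  "sqn x = (\<Sum>i<dim_vec x. (cmod (x $ i))\<^sup>2)"

definition cip :: "complex vec \<Rightarrow> complex vec \<Rightarrow> complex" where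
  "cip y w = (\<Sum>i<dim_vec w. cnj (y $ i) * w $ i)"

lemma Gt_out: "t \<notin> S \<Longrightarrow> Gt g t = 0" by (simp add: Gt_def)
lemma Gt_in: "t \<in> S \<Longrightarrow> Gt g t = g t" by (simp add: Gt_def)

lemma cont_Pv: "continuous_on UNIV (Pv x)"
  unfolding Pv_def by (intro continuous_intros cont_ee[THEN continuous_on_subset]) auto

lemma int_G:
  assumes g: "good g B" and h: "continuous_on UNIV h"
  shows "integrable lborel (\<lambda>t. Gt g t * h t)"
proof -
  have "compact (h ` S)" by (intro compact_continuous_image continuous_on_subset[OF h]) auto
  then obtain C where C: "\<And>t. t \<in> S \<Longrightarrow> norm (h t) \<le> C"
    using compact_imp_bounded bounded_iff by (metis image_eqI)
  have [measurable]: "Gt g \<in> borel_measurable lborel" using g by (simp add: good_def)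
  have [measurable]: "h \<in> borel_measurable lborel" using borel_measurable_continuous_onI[OF h] by simp
  have B0: "0 \<le> B" using g by (simp add: good_def)
  have ae: "AE t in lborel. t \<in> S \<longrightarrow> cmod (g t) \<le> B" using g by (simp add: good_def)
  show ?thesis
  proof (rule integrableI_bounded_set[where A=S and B="B * C"])
    show "S \<in> sets lborel" by simp
    show "(\<lambda>t. Gt g t * h t) \<in> borel_measurable lborel" by measurable
    show "emeasure lborel S < \<infinity>" by simp
    show "AE t in lborel. t \<in> S \<longrightarrow> norm (Gt g t * h t) \<le> B * C"
      using ae
    proof eventually_elim
      case (elim t)
      show ?case
      proof
        assume t: "t \<in> S"
        then have "cmod (g t) * norm (h t) \<le> B * C"
          using elim C[OF t] B0 by (intro mult_mono) auto
        then show "norm (Gt g t * h t) \<le> B * C" using t by (simp add: Gt_in norm_mult)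
      qed
    qed
    show "AE t in lborel. t \<notin> S \<longrightarrow> Gt g t * h t = 0" by (simp add: Gt_out)
  qed
qed

lemma fc_eq: "fourier_coeff g k = complex_of_real (1 / (2 * pi)) * integral\<^sup>L lborel (\<lambda>t. Gt g t * ee (-k) t)"
  unfolding fourier_coeff_def set_lebesgue_integral_def Gt_def ee_def
  by (simp add: mult_scaleR_left)

lemma toeplitz_mult_index:
  assumes "x \<in> carrier_vec n" "i < n"
  shows "(toeplitz n g *\<^sub>v x) $ i = (\<Sum>j<n. fourier_coeff g (int i - int j) * x $ j)"
  using assms by (simp add: toeplitz_def mult_mat_vec_def scalar_prod_def atLeast0LessThan)

lemma dim_toeplitz_mult[simp]: "dim_vec (toeplitz n g *\<^sub>v x) = n"
  by (simp add: toeplitz_def)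

lemma dim_toeplitz[simp]: "dim_row (toeplitz n g) = n" "dim_col (toeplitz n g) = n"
  by (simp_all add: toeplitz_def)

lemma toeplitz_carrier[simp]: "toeplitz n g \<in> carrier_mat n n"
  by (simp add: toeplitz_def)

lemma QF:
  assumes g: "good g B" and x: "x \<in> carrier_vec n" and y: "y \<in> carrier_vec n"
  shows "cip y (toeplitz n g *\<^sub>v x) = complex_of_real (1 / (2 * pi)) * integral\<^sup>L lborel (\<lambda>t. Gt g t * (Pv x t * cnj (Pv y t)))"
proof -
  define I where "I i j = integral\<^sup>L lborel (\<lambda>t. Gt g t * ee (int j - int i) t)" for i j :: nat
  have intg: "integrable lborel (\<lambda>t. Gt g t * ee k t)" for k using int_G[OF g cont_ee] .
  have dx: "dim_vec x = n" and dy: "dim_vec y = n" using x y by auto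
  have lhs: "cip y (toeplitz n g *\<^sub>v x) = (\<Sum>i<n. \<Sum>j<n. complex_of_real (1 / (2 * pi)) * (cnj (y $ i) * x $ j * I i j))"
    unfolding cip_def dim_toeplitz_mult
  proof (intro sum.cong refl)
    fix i assume "i \<in> {..<n}"
    then have "(toeplitz n g *\<^sub>v x) $ i = (\<Sum>j<n. fourier_coeff g (int i - int j) * x $ j)"
      using toeplitz_mult_index[OF x] by simp
    then show "cnj (y $ i) * (toeplitz n g *\<^sub>v x) $ i = (\<Sum>j<n. complex_of_real (1 / (2 * pi)) * (cnj (y $ i) * x $ j * I i j))"
      by (simp add: fc_eq I_def sum_distrib_left mult_ac)
  qed
  have pt: "Gt g t * (Pv x t * cnj (Pv y t)) = (\<Sum>i<n. \<Sum>j<n. (cnj (y $ i) * x $ j) * (Gt g t * ee (int j - int i) t))" for t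
  proof -
    have "Pv x t * cnj (Pv y t) = (\<Sum>j<n. x $ j * ee (int j) t) * (\<Sum>i<n. cnj (y $ i) * ee (- int i) t)"
      using dx dy by (simp add: Pv_def cnj_ee)
    also have "\<dots> = (\<Sum>j<n. \<Sum>i<n. (x $ j * ee (int j) t) * (cnj (y $ i) * ee (- int i) t))"
      by (rule sum_product)
    also have "\<dots> = (\<Sum>i<n. \<Sum>j<n. (x $ j * ee (int j) t) * (cnj (y $ i) * ee (- int i) t))"
      by (rule sum.swap)
    also have "\<dots> = (\<Sum>i<n. \<Sum>j<n. (cnj (y $ i) * x $ j) * ee (int j - int i) t)"
      by (intro sum.cong refl) (simp add: ee_diff mult_ac)
    finally show ?thesis by (simp add: sum_distrib_left mult_ac)
  qed
  have "integral\<^sup>L lborel (\<lambda>t. Gt g t * (Pv x t * cnj (Pv y t)))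
      = integral\<^sup>L lborel (\<lambda>t. \<Sum>i<n. \<Sum>j<n. (cnj (y $ i) * x $ j) * (Gt g t * ee (int j - int i) t))"
    unfolding pt ..
  also have "\<dots> = (\<Sum>i<n. integral\<^sup>L lborel (\<lambda>t. \<Sum>j<n. (cnj (y $ i) * x $ j) * (Gt g t * ee (int j - int i) t)))"
    by (rule Bochner_Integration.integral_sum) (intro Bochner_Integration.integrable_sum integrable_mult_right intg)
  also have "\<dots> = (\<Sum>i<n. \<Sum>j<n. integral\<^sup>L lborel (\<lambda>t. (cnj (y $ i) * x $ j) * (Gt g t * ee (int j - int i) t)))"
    by (intro sum.cong refl Bochner_Integration.integral_sum integrable_mult_right intg)
  also have "\<dots> = (\<Sum>i<n. \<Sum>j<n. (cnj (y $ i) * x $ j) * I i j)"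
    by (simp add: I_def)
  finally show ?thesis unfolding lhs by (simp add: sum_distrib_left)
qed

lemma good_one: "good (\<lambda>_. 1) 1"
  unfolding good_def Gt_def by auto

lemma fc_one: "fourier_coeff (\<lambda>_. 1) k = (if k = 0 then 1 else 0)"
proof -
  have "integral\<^sup>L lborel (\<lambda>t. Gt (\<lambda>_. 1) t * ee (-k) t) = integral\<^sup>L lborel (\<lambda>t. indicator S t *\<^sub>R ee (-k) t)"
    by (simp add: Gt_def)
  then show ?thesis by (simp add: fc_eq int_ee)
qed

lemma toeplitz_one_mult:
  assumes x: "x \<in> carrier_vec n"
  shows "toeplitz n (\<lambda>_. 1) *\<^sub>v x = x"
proof (rule eq_vecI)
  show "dim_vec (toeplitz n (\<lambda>_. 1) *\<^sub>v x) = dim_vec x" using x by simp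
  fix i assume "i < dim_vec x"
  then have i: "i < n" using x by simp
  have "(toeplitz n (\<lambda>_. 1) *\<^sub>v x) $ i = (\<Sum>j<n. (if int i - int j = 0 then 1 else 0) * x $ j)"
    using toeplitz_mult_index[OF x i] by (simp add: fc_one)
  also have "\<dots> = (\<Sum>j<n. if j = i then x $ j else 0)"
    by (intro sum.cong refl) auto
  also have "\<dots> = x $ i" using i by simp
  finally show "(toeplitz n (\<lambda>_. 1) *\<^sub>v x) $ i = x $ i" .
qed

lemma ORTH:
  assumes x: "x \<in> carrier_vec n" and y: "y \<in> carrier_vec n"
  shows "cip y x = complex_of_real (1 / (2 * pi)) * integral\<^sup>L lborel (\<lambda>t. Gt (\<lambda>_. 1) t * (Pv x t * cnj (Pv y t)))"
  using QF[OF good_one x y] toeplitz_one_mult[OF x] by simp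

lemma mult_cnj_sq: "z * cnj z = (complex_of_real (cmod z))^2"
  using complex_norm_square[of z] by simp

lemma cnj_mult_sq: "cnj z * z = (complex_of_real (cmod z))^2"
  using complex_norm_square[of z] by (simp add: mult.commute)

lemma cip_self: "cip x x = complex_of_real (sqn x)"
  unfolding cip_def sqn_def by (simp add: cnj_mult_sq)

lemma ORTHr:
  assumes x: "x \<in> carrier_vec n"
  shows "integral\<^sup>L lborel (\<lambda>t. indicator S t * (cmod (Pv x t))\<^sup>2) = 2 * pi * sqn x"
proof -
  have eq: "(\<lambda>t. Gt (\<lambda>_. 1) t * (Pv x t * cnj (Pv x t))) = (\<lambda>t. complex_of_real (indicator S t * (cmod (Pv x t))\<^sup>2))"
    by (rule ext) (simp add: Gt_def mult_cnj_sq scaleR_conv_of_real)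
  have "complex_of_real (sqn x) = complex_of_real (1 / (2 * pi)) * integral\<^sup>L lborel (\<lambda>t. complex_of_real (indicator S t * (cmod (Pv x t))\<^sup>2))"
    using ORTH[OF x x] cip_self[of x] unfolding eq by simp
  also have "\<dots> = complex_of_real (1 / (2 * pi) * integral\<^sup>L lborel (\<lambda>t. indicator S t * (cmod (Pv x t))\<^sup>2))"
    by (subst integral_complex_of_real) simp
  finally have "sqn x = 1 / (2 * pi) * integral\<^sup>L lborel (\<lambda>t. indicator S t * (cmod (Pv x t))\<^sup>2)"
    using of_real_eq_iff by blast
  then show ?thesis by (simp add: field_simps)
qed


lemma sqn_nonneg: "0 \<le> sqn x" by (simp add: sqn_def sum_nonneg)

lemma vnorm_nsq: "vnorm x = sqrt (sqn x)" unfolding vnorm_def sqn_def ..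

lemma vnorm_nonneg: "0 \<le> vnorm x" unfolding vnorm_nsq using sqn_nonneg by simp

lemma vnorm_sq: "(vnorm x)\<^sup>2 = sqn x" unfolding vnorm_nsq using sqn_nonneg by simp

lemma vnorm_L2: "vnorm x = L2_set (\<lambda>i. cmod (x $ i)) {..<dim_vec x}"
  unfolding vnorm_def L2_set_def ..

lemma sqn_zero:
  assumes "sqn x = 0" "i < dim_vec x"
  shows "x $ i = 0"
proof -
  have "\<forall>i\<in>{..<dim_vec x}. (cmod (x $ i))\<^sup>2 = 0"
    using assms(1) unfolding sqn_def by (subst sum_nonneg_eq_0_iff[symmetric]) auto
  then show ?thesis using assms(2) by simp
qed

lemma Pv_zero: "sqn x = 0 \<Longrightarrow> Pv x t = 0"
  unfolding Pv_def using sqn_zero by (intro sum.neutral) auto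

lemma CS:
  assumes "dim_vec y = dim_vec w"
  shows "cmod (cip y w) \<le> vnorm y * vnorm w"
proof -
  have "cmod (cip y w) \<le> (\<Sum>i<dim_vec w. cmod (cnj (y $ i) * w $ i))"
    unfolding cip_def by (rule norm_sum)
  also have "\<dots> = (\<Sum>i<dim_vec w. \<bar>cmod (y $ i)\<bar> * \<bar>cmod (w $ i)\<bar>)"
    by (simp add: norm_mult)
  also have "\<dots> \<le> L2_set (\<lambda>i. cmod (y $ i)) {..<dim_vec w} * L2_set (\<lambda>i. cmod (w $ i)) {..<dim_vec w}"
    by (rule L2_set_mult_ineq)
  also have "\<dots> = vnorm y * vnorm w" unfolding vnorm_L2 assms ..
  finally show ?thesis .
qed

lemma vnorm_diff:
  assumes "dim_vec a = n" "dim_vec b = n"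
  shows "vnorm (a - b) \<le> vnorm a + vnorm b"
proof -
  have "vnorm (a - b) = L2_set (\<lambda>i. cmod (a $ i - b $ i)) {..<n}"
    unfolding vnorm_L2 using assms by (intro L2_set_cong) auto
  also have "\<dots> \<le> L2_set (\<lambda>i. cmod (a $ i) + cmod (b $ i)) {..<n}"
    by (intro L2_set_mono norm_triangle_ineq4) auto
  also have "\<dots> \<le> L2_set (\<lambda>i. cmod (a $ i)) {..<n} + L2_set (\<lambda>i. cmod (b $ i)) {..<n}"
    by (rule L2_set_triangle_ineq)
  also have "\<dots> = vnorm a + vnorm b" unfolding vnorm_L2 assms ..
  finally show ?thesis .
qed

lemma AMGM:
  assumes x: "x \<in> carrier_vec n" and y: "y \<in> carrier_vec n"
  shows "integral\<^sup>L lborel (\<lambda>t. indicator S t * (cmod (Pv x t) * cmod (Pv y t))) \<le> 2 * pi * (vnorm x * vnorm y)"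
proof -
  let ?J = "integral\<^sup>L lborel (\<lambda>t. indicator S t * (cmod (Pv x t) * cmod (Pv y t)))"
  have ci: "integrable lborel (\<lambda>t. indicator S t * h t)" if "continuous_on UNIV h" for h :: "real \<Rightarrow> real"
    using borel_integrable_compact[of S h] continuous_on_subset[OF that] by simp
  have cx: "continuous_on UNIV (\<lambda>t. cmod (Pv x t))" and cy: "continuous_on UNIV (\<lambda>t. cmod (Pv y t))"
    by (intro continuous_on_norm cont_Pv)+
  have bound: "?J \<le> pi * (r\<^sup>2 * sqn x + sqn y) / r" if r: "0 < r" for r
  proof -
    have pw: "indicator S t * (cmod (Pv x t) * cmod (Pv y t)) \<le> indicator S t * ((r\<^sup>2 * (cmod (Pv x t))\<^sup>2 + (cmod (Pv y t))\<^sup>2) / (2 * r))" for t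
    proof -
      have "0 \<le> (r * cmod (Pv x t) - cmod (Pv y t))\<^sup>2" by simp
      then have "2 * r * (cmod (Pv x t) * cmod (Pv y t)) \<le> r\<^sup>2 * (cmod (Pv x t))\<^sup>2 + (cmod (Pv y t))\<^sup>2"
        by (simp add: power2_eq_square algebra_simps)
      then have "cmod (Pv x t) * cmod (Pv y t) \<le> (r\<^sup>2 * (cmod (Pv x t))\<^sup>2 + (cmod (Pv y t))\<^sup>2) / (2 * r)"
        using r by (simp add: field_simps)
      then show ?thesis by (intro mult_left_mono) auto
    qed
    have c1: "continuous_on UNIV (\<lambda>t. cmod (Pv x t) * cmod (Pv y t))" by (intro continuous_intros cont_Pv)
    have c2: "continuous_on UNIV (\<lambda>t. (r\<^sup>2 * (cmod (Pv x t))\<^sup>2 + (cmod (Pv y t))\<^sup>2) / (2 * r))"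
      using r by (intro continuous_intros cont_Pv) auto
    have "?J \<le> integral\<^sup>L lborel (\<lambda>t. indicator S t * ((r\<^sup>2 * (cmod (Pv x t))\<^sup>2 + (cmod (Pv y t))\<^sup>2) / (2 * r)))"
      by (rule integral_mono[OF ci[OF c1] ci[OF c2] pw])
    also have "\<dots> = integral\<^sup>L lborel (\<lambda>t. (r\<^sup>2 / (2 * r)) * (indicator S t * (cmod (Pv x t))\<^sup>2) + (1 / (2 * r)) * (indicator S t * (cmod (Pv y t))\<^sup>2))"
      by (rule Bochner_Integration.integral_cong) (simp_all add: add_divide_distrib ring_distribs mult_ac)
    also have "\<dots> = (r\<^sup>2 / (2 * r)) * integral\<^sup>L lborel (\<lambda>t. indicator S t * (cmod (Pv x t))\<^sup>2) + (1 / (2 * r)) * integral\<^sup>L lborel (\<lambda>t. indicator S t * (cmod (Pv y t))\<^sup>2)"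
      by (subst Bochner_Integration.integral_add) (auto intro!: integrable_mult_right ci continuous_intros cont_Pv)
    also have "\<dots> = pi * (r\<^sup>2 * sqn x + sqn y) / r"
      unfolding ORTHr[OF x] ORTHr[OF y] using r by (simp add: field_simps power2_eq_square)
    finally show ?thesis .
  qed
  show ?thesis
  proof (cases "sqn x = 0 \<or> sqn y = 0")
    case True
    then have "(\<lambda>t. indicator S t * (cmod (Pv x t) * cmod (Pv y t))) = (\<lambda>t. 0)"
      using Pv_zero by (intro ext) auto
    then show ?thesis by (simp add: vnorm_nonneg)
  next
    case False
    then have px: "0 < sqn x" and py: "0 < sqn y" using sqn_nonneg[of x] sqn_nonneg[of y] by linarith+
    define r where "r = sqrt (sqn y) / sqrt (sqn x)"
    have r: "0 < r" unfolding r_def using px py by simp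
    have "r\<^sup>2 * sqn x = sqn y" unfolding r_def using px py by (simp add: power_divide)
    then have "pi * (r\<^sup>2 * sqn x + sqn y) / r = 2 * pi * (sqrt (sqn x) * sqrt (sqn y))"
      unfolding r_def using px py by (simp add: field_simps)
    then show ?thesis using bound[OF r] unfolding vnorm_nsq by simp
  qed
qed


lemma BND:
  assumes g: "good g B" and x: "x \<in> carrier_vec n" and y: "y \<in> carrier_vec n"
  shows "cmod (cip y (toeplitz n g *\<^sub>v x)) \<le> B * (vnorm x * vnorm y)"
proof -
  let ?F = "\<lambda>t. Gt g t * (Pv x t * cnj (Pv y t))"
  let ?H = "\<lambda>t. cmod (Pv x t) * cmod (Pv y t)"
  have B0: "0 \<le> B" using g by (simp add: good_def)
  have iF: "integrable lborel ?F" by (rule int_G[OF g]) (intro continuous_intros cont_Pv)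
  have ci: "integrable lborel (\<lambda>t. indicator S t * h t)" if "continuous_on UNIV h" for h :: "real \<Rightarrow> real"
    using borel_integrable_compact[of S h] continuous_on_subset[OF that] by simp
  have cH: "continuous_on UNIV ?H" by (intro continuous_intros cont_Pv)
  have iR: "integrable lborel (\<lambda>t. indicator S t * (B * ?H t))"
    by (rule ci) (intro continuous_intros cont_Pv)
  have aeg: "AE t in lborel. t \<in> S \<longrightarrow> cmod (g t) \<le> B" using g by (simp add: good_def)
  have ae: "AE t in lborel. norm (?F t) \<le> indicator S t * (B * ?H t)"
    using aeg
  proof eventually_elim
    case (elim t)
    show ?case
    proof (cases "t \<in> S")
      case True
      then have "cmod (g t) * ?H t \<le> B * ?H t" using elim by (intro mult_right_mono) auto
      then show ?thesis using True by (simp add: Gt_in norm_mult mult.assoc)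
    next
      case False then show ?thesis by (simp add: Gt_out)
    qed
  qed
  have eq: "(\<lambda>t. indicator S t * (B * ?H t)) = (\<lambda>t. B * (indicator S t * ?H t))"
    by (rule ext) (simp add: mult_ac)
  have "norm (integral\<^sup>L lborel ?F) \<le> integral\<^sup>L lborel (\<lambda>t. norm (?F t))"
    by (rule integral_norm_bound)
  also have "\<dots> \<le> integral\<^sup>L lborel (\<lambda>t. indicator S t * (B * ?H t))"
    by (rule integral_mono_AE[OF integrable_norm[OF iF] iR ae])
  also have "\<dots> = B * integral\<^sup>L lborel (\<lambda>t. indicator S t * ?H t)"
    unfolding eq by simp
  also have "\<dots> \<le> B * (2 * pi * (vnorm x * vnorm y))"
    by (intro mult_left_mono AMGM[OF x y] B0)
  finally have I: "norm (integral\<^sup>L lborel ?F) \<le> B * (2 * pi * (vnorm x * vnorm y))" .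
  have "cmod (cip y (toeplitz n g *\<^sub>v x)) = (1 / (2 * pi)) * norm (integral\<^sup>L lborel ?F)"
    unfolding QF[OF g x y] norm_mult norm_of_real by simp
  also have "\<dots> \<le> (1 / (2 * pi)) * (B * (2 * pi * (vnorm x * vnorm y)))"
    by (intro mult_left_mono I) simp
  also have "\<dots> = B * (vnorm x * vnorm y)" by simp
  finally show ?thesis .
qed

lemma opbound:
  assumes g: "good g B" and x: "x \<in> carrier_vec n"
  shows "vnorm (toeplitz n g *\<^sub>v x) \<le> B * vnorm x"
proof -
  define y where "y = toeplitz n g *\<^sub>v x"
  have y: "y \<in> carrier_vec n" unfolding y_def by (rule carrier_vecI) simp
  have B0: "0 \<le> B" using g by (simp add: good_def)
  have "cmod (cip y y) \<le> B * (vnorm x * vnorm y)" using BND[OF g x y] unfolding y_def .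
  then have "vnorm y * vnorm y \<le> (B * vnorm x) * vnorm y"
    unfolding cip_self using sqn_nonneg[of y] vnorm_sq[of y] by (simp add: power2_eq_square mult_ac)
  then have "vnorm y \<le> B * vnorm x"
  proof (cases "vnorm y = 0")
    case True
    then show ?thesis using vnorm_nonneg[of x] B0 by simp
  next
    case False
    then have "0 < vnorm y" using vnorm_nonneg[of y] by linarith
    then show ?thesis using mult_right_le_imp_le[OF \<open>vnorm y * vnorm y \<le> (B * vnorm x) * vnorm y\<close>] by blast
  qed
  then show ?thesis unfolding y_def .
qed

lemma LB:
  assumes g: "good (\<lambda>t. complex_of_real (cmod (f t))) B" and low: "\<forall>t\<in>S. \<delta> \<le> cmod (f t)"
    and x: "x \<in> carrier_vec n"
  shows "\<delta> * sqn x \<le> Re (cip x (toeplitz n (\<lambda>t. complex_of_real (cmod (f t))) *\<^sub>v x))"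
proof -
  define h where "h t = indicator S t * cmod (f t) * (cmod (Pv x t))\<^sup>2" for t
  have eq: "(\<lambda>t. Gt (\<lambda>t. complex_of_real (cmod (f t))) t * (Pv x t * cnj (Pv x t))) = (\<lambda>t. complex_of_real (h t))"
    by (rule ext) (simp add: h_def Gt_def mult_cnj_sq scaleR_conv_of_real)
  have ih: "integrable lborel (\<lambda>t. complex_of_real (h t))"
    unfolding eq[symmetric] by (rule int_G[OF g]) (intro continuous_intros cont_Pv)
  then have ih': "integrable lborel h" using integrable_Re[OF ih] by simp
  have ci: "integrable lborel (\<lambda>t. indicator S t * hh t)" if "continuous_on UNIV hh" for hh :: "real \<Rightarrow> real"
    using borel_integrable_compact[of S hh] continuous_on_subset[OF that] by simp
  have i2: "integrable lborel (\<lambda>t. \<delta> * (indicator S t * (cmod (Pv x t))\<^sup>2))"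
    by (intro integrable_mult_right ci) (intro continuous_intros cont_Pv)
  have pw: "\<delta> * (indicator S t * (cmod (Pv x t))\<^sup>2) \<le> h t" for t
  proof (cases "t \<in> S")
    case True
    then have "\<delta> * (cmod (Pv x t))\<^sup>2 \<le> cmod (f t) * (cmod (Pv x t))\<^sup>2" using low by (intro mult_right_mono) auto
    then show ?thesis using True by (simp add: h_def)
  next
    case False then show ?thesis by (simp add: h_def)
  qed
  have "\<delta> * (2 * pi * sqn x) = integral\<^sup>L lborel (\<lambda>t. \<delta> * (indicator S t * (cmod (Pv x t))\<^sup>2))"
    by (simp add: ORTHr[OF x])
  also have "\<dots> \<le> integral\<^sup>L lborel h" by (rule integral_mono[OF i2 ih' pw])
  finally have I: "\<delta> * (2 * pi * sqn x) \<le> integral\<^sup>L lborel h" .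
  have "cip x (toeplitz n (\<lambda>t. complex_of_real (cmod (f t))) *\<^sub>v x) = complex_of_real (1 / (2 * pi) * integral\<^sup>L lborel h)"
    unfolding QF[OF g x x] eq by simp
  then have "Re (cip x (toeplitz n (\<lambda>t. complex_of_real (cmod (f t))) *\<^sub>v x)) = 1 / (2 * pi) * integral\<^sup>L lborel h"
    by simp
  moreover have "\<delta> * sqn x \<le> 1 / (2 * pi) * integral\<^sup>L lborel h"
    using I by (simp add: field_simps)
  ultimately show ?thesis by simp
qed

lemma exch_dims[simp]: "dim_row (exchange n) = n" "dim_col (exchange n) = n"
  by (simp_all add: exchange_def)

lemma exch_carrier[simp]: "exchange n \<in> carrier_mat n n"
  by (rule carrier_matI) simp_all

lemma exch_index:
  assumes v: "v \<in> carrier_vec n" and i: "i < n"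
  shows "(exchange n *\<^sub>v v) $ i = v $ (n - Suc i)"
proof -
  have "(exchange n *\<^sub>v v) $ i = (\<Sum>j<n. (if i + j + 1 = n then 1 else 0) * v $ j)"
    using v i by (simp add: exchange_def mult_mat_vec_def scalar_prod_def atLeast0LessThan)
  also have "\<dots> = (\<Sum>j<n. if j = n - Suc i then v $ j else 0)"
    using i by (intro sum.cong refl) auto
  also have "\<dots> = v $ (n - Suc i)" using i by simp
  finally show ?thesis .
qed

lemma exch_sqn:
  assumes v: "v \<in> carrier_vec n"
  shows "sqn (exchange n *\<^sub>v v) = sqn v"
proof -
  have "sqn (exchange n *\<^sub>v v) = (\<Sum>i<n. (cmod (v $ (n - Suc i)))\<^sup>2)"
    unfolding sqn_def using v exch_index[OF v] by simp
  also have "\<dots> = (\<Sum>i<n. (cmod (v $ i))\<^sup>2)" by (rule sum.nat_diff_reindex)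
  also have "\<dots> = sqn v" using v by (simp add: sqn_def)
  finally show ?thesis .
qed

lemma exch_vnorm: "v \<in> carrier_vec n \<Longrightarrow> vnorm (exchange n *\<^sub>v v) = vnorm v"
  unfolding vnorm_nsq by (simp add: exch_sqn)

lemma exch_cip:
  assumes v: "v \<in> carrier_vec n" and w: "w \<in> carrier_vec n"
  shows "cip v (exchange n *\<^sub>v w) = cip (exchange n *\<^sub>v v) w"
proof -
  define g where "g i = cnj (v $ (n - Suc i)) * w $ i" for i
  have "cip (exchange n *\<^sub>v v) w = (\<Sum>i<n. g i)"
    unfolding cip_def g_def using w exch_index[OF v] by simp
  also have "\<dots> = (\<Sum>i<n. g (n - Suc i))" by (rule sum.nat_diff_reindex[symmetric])
  also have "\<dots> = (\<Sum>i<n. cnj (v $ i) * w $ (n - Suc i))"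
  proof (intro sum.cong refl)
    fix i assume "i \<in> {..<n}"
    then have "n - Suc (n - Suc i) = i" by simp
    then show "g (n - Suc i) = cnj (v $ i) * w $ (n - Suc i)" unfolding g_def by simp
  qed
  also have "\<dots> = cip v (exchange n *\<^sub>v w)"
    unfolding cip_def using exch_index[OF w] by simp
  finally show ?thesis by (rule sym)
qed

lemma spec_bound:
  assumes A: "A \<in> carrier_mat n n" and C: "0 \<le> C"
    and b: "\<And>x. x \<in> carrier_vec n \<Longrightarrow> vnorm (A *\<^sub>v x) \<le> C * vnorm x"
  shows "0 \<le> spec_norm A \<and> spec_norm A \<le> C"
proof -
  let ?X = "{vnorm (A *\<^sub>v x) | x. x \<in> carrier_vec (dim_col A) \<and> vnorm x \<le> 1}"
  have dc: "dim_col A = n" using A by simp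
  have ub: "z \<le> C" if "z \<in> ?X" for z
  proof -
    from that obtain x where x: "x \<in> carrier_vec n" "vnorm x \<le> 1" "z = vnorm (A *\<^sub>v x)" using dc by auto
    have "z \<le> C * vnorm x" using b[OF x(1)] x(3) by simp
    also have "\<dots> \<le> C * 1" by (intro mult_left_mono x(2) C)
    finally show ?thesis by simp
  qed
  have v0: "vnorm (0\<^sub>v n) = 0" by (simp add: vnorm_def)
  have mem: "vnorm (A *\<^sub>v 0\<^sub>v n) \<in> ?X" using dc v0 by auto
  have ne: "?X \<noteq> {}" using mem by blast
  have "Sup ?X \<le> C" by (rule cSup_least[OF ne ub])
  moreover have "vnorm (A *\<^sub>v 0\<^sub>v n) \<le> Sup ?X"
    by (rule cSup_upper[OF mem]) (rule bdd_aboveI[of _ C], rule ub)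
  ultimately show ?thesis unfolding spec_norm_def using vnorm_nonneg[of "A *\<^sub>v 0\<^sub>v n"] by linarith
qed


lemma eig:
  assumes g: "good g 1" and real: "\<forall>k. fourier_coeff g k \<in> \<real>"
    and ev: "eigenvalue (exchange n * toeplitz n g) e"
  shows "e \<in> \<real> \<and> -1 \<le> Re e \<and> Re e \<le> 1"
proof -
  let ?A = "toeplitz n g" and ?Y = "exchange n"
  have dM: "dim_row (?Y * ?A) = n" by simp
  obtain v where v: "v \<in> carrier_vec n" and v0: "v \<noteq> 0\<^sub>v n" and Mv: "(?Y * ?A) *\<^sub>v v = e \<cdot>\<^sub>v v"
    using ev unfolding eigenvalue_def eigenvector_def dM by blast
  have Av: "?A *\<^sub>v v \<in> carrier_vec n" by (rule carrier_vecI) simp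
  have Yv: "?Y *\<^sub>v v \<in> carrier_vec n" by (rule carrier_vecI) simp
  have assoc: "(?Y * ?A) *\<^sub>v v = ?Y *\<^sub>v (?A *\<^sub>v v)"
    by (rule assoc_mult_mat_vec[OF exch_carrier toeplitz_carrier v])
  have dv: "dim_vec v = n" using v by simp
  have sp: "0 < sqn v"
  proof (rule ccontr)
    assume "\<not> 0 < sqn v"
    then have s0: "sqn v = 0" using sqn_nonneg[of v] by linarith
    have "v = 0\<^sub>v n"
    proof (rule eq_vecI)
      show "dim_vec v = dim_vec (0\<^sub>v n)" using dv by simp
      fix i assume "i < dim_vec (0\<^sub>v n)"
      then have "i < dim_vec v" using dv by simp
      then show "v $ i = 0\<^sub>v n $ i" using sqn_zero[OF s0] dv by simp
    qed
    then show False using v0 by simp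
  qed
  define T where "T = cip v ((?Y * ?A) *\<^sub>v v)"
  have T1: "T = e * complex_of_real (sqn v)"
  proof -
    have "T = (\<Sum>i<n. cnj (v $ i) * (e * v $ i))" unfolding T_def Mv cip_def using dv
      by (intro sum.cong) auto
    also have "\<dots> = e * cip v v" unfolding cip_def using dv by (simp add: sum_distrib_left mult_ac)
    finally show ?thesis by (simp add: cip_self)
  qed
  have T2: "T = cip (?Y *\<^sub>v v) (?A *\<^sub>v v)" unfolding T_def assoc by (rule exch_cip[OF v Av])
  have "cmod T \<le> 1 * (vnorm v * vnorm (?Y *\<^sub>v v))" unfolding T2 by (rule BND[OF g v Yv])
  also have "\<dots> = sqn v" using exch_vnorm[OF v] vnorm_sq[of v] by (simp add: power2_eq_square)
  finally have "cmod e * sqn v \<le> 1 * sqn v" unfolding T1 norm_mult using sqn_nonneg[of v] by simp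
  then have e1: "cmod e \<le> 1" using mult_right_le_imp_le sp by blast
  have TR: "T \<in> \<real>"
  proof -
    define m where "m i j = fourier_coeff g (int (n - Suc i) - int j)" for i j
    have msym: "m i j = m j i" if "i < n" "j < n" for i j
    proof -
      have "int (n - Suc i) - int j = int (n - Suc j) - int i" using that by (simp add: of_nat_diff)
      then show ?thesis unfolding m_def by simp
    qed
    have mr: "cnj (m i j) = m i j" for i j using real unfolding m_def by (simp add: Reals_cnj_iff)
    have "T = (\<Sum>i<n. cnj (v $ i) * (?Y *\<^sub>v (?A *\<^sub>v v)) $ i)" unfolding T_def assoc cip_def by simp
    also have "\<dots> = (\<Sum>i<n. \<Sum>j<n. cnj (v $ i) * (m i j * v $ j))"
    proof (intro sum.cong refl)
      fix i assume "i \<in> {..<n}" then have i: "i < n" by simp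
      have "(?Y *\<^sub>v (?A *\<^sub>v v)) $ i = (?A *\<^sub>v v) $ (n - Suc i)" by (rule exch_index[OF Av i])
      also have "\<dots> = (\<Sum>j<n. m i j * v $ j)" unfolding m_def using i by (intro toeplitz_mult_index[OF v]) simp
      finally show "cnj (v $ i) * (?Y *\<^sub>v (?A *\<^sub>v v)) $ i = (\<Sum>j<n. cnj (v $ i) * (m i j * v $ j))"
        by (simp add: sum_distrib_left)
    qed
    finally have Texp: "T = (\<Sum>i<n. \<Sum>j<n. cnj (v $ i) * (m i j * v $ j))" .
    have "cnj T = (\<Sum>i<n. \<Sum>j<n. v $ i * (m i j * cnj (v $ j)))" unfolding Texp by (simp add: cnj_sum mr)
    also have "\<dots> = (\<Sum>j<n. \<Sum>i<n. v $ i * (m i j * cnj (v $ j)))" by (rule sum.swap)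
    also have "\<dots> = (\<Sum>j<n. \<Sum>i<n. cnj (v $ j) * (m j i * v $ i))"
      by (intro sum.cong refl) (simp add: msym mult_ac)
    also have "\<dots> = T" unfolding Texp ..
    finally show ?thesis using Reals_cnj_iff by blast
  qed
  have "e = T / complex_of_real (sqn v)" using T1 sp by simp
  then have eR: "e \<in> \<real>" using TR by simp
  then obtain r where r: "e = complex_of_real r" by (auto elim: Reals_cases)
  then have "\<bar>r\<bar> \<le> 1" using e1 by simp
  then have "-1 \<le> r \<and> r \<le> 1" unfolding abs_le_iff by (intro conjI; linarith)
  then show ?thesis using eR r by simp
qed


lemma refl_integrable:
  fixes h :: "real \<Rightarrow> complex"
  assumes "integrable lborel h"
  shows "integrable lborel (\<lambda>t. h (-t))"
  using lborel_integrable_real_affine[OF assms, of "-1" 0] by simp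

lemma refl_integral:
  fixes h :: "real \<Rightarrow> complex"
  shows "integral\<^sup>L lborel (\<lambda>t. h (-t)) = integral\<^sup>L lborel h"
  using lborel_integral_real_affine[of "-1" h 0] by simp

lemma AE_not_pi: "AE t in lborel. t \<noteq> pi \<and> t \<noteq> -pi"
  using AE_lborel_singleton[of pi] AE_lborel_singleton[of "-pi"] by eventually_elim auto

lemma tilde_real:
  fixes f :: "real \<Rightarrow> complex"
  assumes gf: "good f B"
    and real: "\<forall>k. fourier_coeff f k \<in> \<real>"
    and lower: "\<forall>t\<in>S. \<delta> \<le> cmod (f t)" and dpos: "0 < \<delta>"
  shows "fourier_coeff (\<lambda>t. f t / complex_of_real (cmod (f t))) k \<in> \<real>"
proof -
  define F where "F = Gt f"
  have Fm[measurable]: "F \<in> borel_measurable lborel" using gf by (simp add: good_def F_def)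
  have Fi: "integrable lborel F" using int_G[OF gf, of "\<lambda>_. 1"] by (simp add: F_def)
  have Fni: "integrable lborel (\<lambda>t. F (-t))" by (rule refl_integrable[OF Fi])
  have Fnm[measurable]: "(\<lambda>t. F (-t)) \<in> borel_measurable lborel" using Fni by (rule borel_measurable_integrable)
  have Fout: "F t = 0" if "t \<notin> S" for t using that by (simp add: F_def Gt_out)
  have Fin: "F t = f t" if "t \<in> S" for t using that by (simp add: F_def Gt_in)
  define u where "u t = indicator {-pi<..<pi} t *\<^sub>R (F t - cnj (F (-t)))" for t
  have ui: "integrable lborel u" unfolding u_def
    by (intro integrable_mult_indicator Bochner_Integration.integrable_diff Fi integrable_cnj Fni) simp
  have um: "u \<in> borel_measurable lborel" using ui by (rule borel_measurable_integrable)
  have uz: "u t = 0" if "t \<notin> {-pi<..<pi}" for t using that by (simp add: u_def)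
  have uc: "integral\<^sup>L lborel (\<lambda>t. u t * ee m t) = 0" for m
  proof -
    define H where "H t = F t * ee m t" for t
    have Hi: "integrable lborel H" unfolding H_def F_def by (rule int_G[OF gf cont_ee])
    have Hm[measurable]: "H \<in> borel_measurable lborel" using Hi by (rule borel_measurable_integrable)
    have Hn: "cnj (H (-t)) = cnj (F (-t)) * ee m t" for t by (simp add: H_def cnj_ee ee_neg)
    have Hni: "integrable lborel (\<lambda>t. cnj (H (-t)))" using refl_integrable[OF Hi] by simp
    have Hnm[measurable]: "(\<lambda>t. cnj (H (-t))) \<in> borel_measurable lborel" using Hni by (rule borel_measurable_integrable)
    have "integral\<^sup>L lborel (\<lambda>t. u t * ee m t) = integral\<^sup>L lborel (\<lambda>t. H t - cnj (H (-t)))"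
    proof (rule integral_cong_AE)
      have eem: "ee m \<in> borel_measurable lborel" using borel_measurable_continuous_onI[OF cont_ee] by simp
      show "(\<lambda>t. u t * ee m t) \<in> borel_measurable lborel" by (rule borel_measurable_times[OF um eem])
      show "(\<lambda>t. H t - cnj (H (-t))) \<in> borel_measurable lborel"
        using Bochner_Integration.integrable_diff[OF Hi Hni] by (rule borel_measurable_integrable)
      show "AE t in lborel. u t * ee m t = H t - cnj (H (-t))"
        using AE_not_pi
      proof eventually_elim
        case (elim t)
        show ?case
        proof (cases "t \<in> S")
          case True
          then have "t \<in> {-pi<..<pi}" using elim by auto
          then show ?thesis unfolding u_def Hn by (simp add: H_def algebra_simps)
        next
          case False
          then have "-t \<notin> S" by auto
          then show ?thesis unfolding u_def Hn using False Fout by (simp add: H_def)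
        qed
      qed
    qed
    also have "\<dots> = integral\<^sup>L lborel H - cnj (integral\<^sup>L lborel H)"
      using refl_integral[of "\<lambda>t. cnj (H t)"] by (simp add: Bochner_Integration.integral_diff[OF Hi Hni])
    also have "\<dots> = 0"
    proof -
      have "fourier_coeff f (-m) = complex_of_real (1 / (2 * pi)) * integral\<^sup>L lborel H"
        by (simp add: fc_eq H_def[abs_def] F_def)
      then have "integral\<^sup>L lborel H = complex_of_real (2 * pi) * fourier_coeff f (-m)" by simp
      moreover have "fourier_coeff f (-m) \<in> \<real>" using real by simp
      ultimately have "integral\<^sup>L lborel H \<in> \<real>" by simp
      then show ?thesis using Reals_cnj_iff by simp
    qed
    finally show ?thesis .
  qed
  interpret uctx u using um ui uz uc by unfold_locales auto
  have uAE: "AE t in lborel. u t = 0" by (rule u_AE_zero)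
  define Ft where "Ft = Gt (\<lambda>t. f t / complex_of_real (cmod (f t)))"
  have Ft_eq: "Ft t = F t / complex_of_real (cmod (F t))" for t
    by (cases "t \<in> S") (simp_all add: Ft_def F_def Gt_in Gt_out)
  have Ftm[measurable]: "Ft \<in> borel_measurable lborel" unfolding Ft_eq[abs_def] by measurable
  have Ftn: "AE t in lborel. cnj (Ft (-t)) = Ft t"
    using uAE AE_not_pi
  proof eventually_elim
    case (elim t)
    show ?case
    proof (cases "t \<in> S")
      case True
      then have to: "t \<in> {-pi<..<pi}" using elim by auto
      then have "F t = cnj (F (-t))" using elim(1) by (simp add: u_def)
      moreover have "-t \<in> S" using True by auto
      ultimately have ft: "f (-t) = cnj (f t)" using True Fin by (metis complex_cnj_cnj)
      then have "cmod (f (-t)) = cmod (f t)" by simp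
      then show ?thesis using True \<open>-t \<in> S\<close> ft by (simp add: Ft_def Gt_in)
    next
      case False
      then have "-t \<notin> S" by auto
      then show ?thesis using False by (simp add: Ft_def Gt_out)
    qed
  qed
  define J where "J = integral\<^sup>L lborel (\<lambda>t. Ft t * ee (-k) t)"
  have Ji: "integrable lborel (\<lambda>t. cnj (Ft t) * ee k t)"
  proof -
    have g1: "good (\<lambda>t. f t / complex_of_real (cmod (f t))) 1"
      unfolding good_def using Ftm by (auto simp: Ft_def norm_divide)
    have "integrable lborel (\<lambda>t. Ft t * ee (-k) t)" unfolding Ft_def by (rule int_G[OF g1 cont_ee])
    then have "integrable lborel (\<lambda>t. cnj (Ft t * ee (-k) t))" by (rule integrable_cnj)
    then show ?thesis by (simp add: cnj_ee)
  qed
  have "cnj J = integral\<^sup>L lborel (\<lambda>t. cnj (Ft t * ee (-k) t))"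
    unfolding J_def by (rule Bochner_Integration.integral_cnj[symmetric])
  also have "\<dots> = integral\<^sup>L lborel (\<lambda>t. cnj (Ft t) * ee k t)"
    by (simp add: cnj_ee)
  also have "\<dots> = integral\<^sup>L lborel (\<lambda>t. cnj (Ft (-t)) * ee (-k) t)"
    using refl_integral[of "\<lambda>t. cnj (Ft t) * ee k t"] by (simp add: ee_neg)
  also have "\<dots> = J" unfolding J_def
  proof (rule integral_cong_AE)
    show "(\<lambda>t. cnj (Ft (-t)) * ee (-k) t) \<in> borel_measurable lborel"
      using borel_measurable_integrable[OF refl_integrable[OF Ji]] by (simp add: ee_neg)
    show "(\<lambda>t. Ft t * ee (-k) t) \<in> borel_measurable lborel"
    proof -
      have eem: "ee (-k) \<in> borel_measurable lborel" using borel_measurable_continuous_onI[OF cont_ee] by simp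
      show ?thesis by (rule borel_measurable_times[OF Ftm eem])
    qed
    show "AE t in lborel. cnj (Ft (-t)) * ee (-k) t = Ft t * ee (-k) t"
      using Ftn by eventually_elim simp
  qed
  finally have "J \<in> \<real>" using Reals_cnj_iff by blast
  then show ?thesis unfolding fc_eq Ft_def[symmetric] J_def[symmetric] by simp
qed


lemma vec_zero_of_sqn:
  assumes v: "v \<in> carrier_vec n" and s0: "sqn v = 0"
  shows "v = 0\<^sub>v n"
proof (rule eq_vecI)
  show "dim_vec v = dim_vec (0\<^sub>v n)" using v by simp
  fix i assume "i < dim_vec (0\<^sub>v n)"
  then have "i < dim_vec v" using v by simp
  then show "v $ i = 0\<^sub>v n $ i" using sqn_zero[OF s0] v by simp
qed

lemma main_bound:
  fixes f :: "real \<Rightarrow> complex" and \<delta> B0 :: real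
  assumes gf: "good f B0" and gM: "good (\<lambda>t. complex_of_real (cmod (f t))) B0"
    and gT: "good (\<lambda>t. f t / complex_of_real (cmod (f t))) 1"
    and dpos: "0 < \<delta>" and lower: "\<forall>t\<in>S. \<delta> \<le> cmod (f t)"
  shows "0 \<le> spec_norm
            (the (mat_inverse (toeplitz n (\<lambda>t. complex_of_real (cmod (f t)))))
               * exchange n * toeplitz n f
             - exchange n * toeplitz n (\<lambda>t. f t / complex_of_real (cmod (f t))))
      \<and> spec_norm
            (the (mat_inverse (toeplitz n (\<lambda>t. complex_of_real (cmod (f t)))))
               * exchange n * toeplitz n f
             - exchange n * toeplitz n (\<lambda>t. f t / complex_of_real (cmod (f t)))) \<le> B0 / \<delta> + 1"
proof -
  let ?AM = "toeplitz n (\<lambda>t. complex_of_real (cmod (f t)))"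
  let ?Af = "toeplitz n f"
  let ?At = "toeplitz n (\<lambda>t. f t / complex_of_real (cmod (f t)))"
  let ?Y = "exchange n"
  have B0: "0 \<le> B0" using gf by (simp add: good_def)
  have AMc: "?AM \<in> carrier_mat n n" by simp
  have det: "det ?AM \<noteq> 0"
  proof
    assume "det ?AM = 0"
    then obtain v where v: "v \<in> carrier_vec n" "v \<noteq> 0\<^sub>v n" "?AM *\<^sub>v v = 0\<^sub>v n"
      using det_0_iff_vec_prod_zero[OF AMc] by blast
    have "\<delta> * sqn v \<le> Re (cip v (?AM *\<^sub>v v))" by (rule LB[OF gM lower v(1)])
    also have "cip v (?AM *\<^sub>v v) = 0" unfolding v(3) cip_def by simp
    finally have "sqn v \<le> 0" using dpos by (simp add: mult_le_0_iff)
    then have "sqn v = 0" using sqn_nonneg[of v] by linarith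
    then show False using vec_zero_of_sqn[OF v(1)] v(2) by simp
  qed
  have unit: "?AM \<in> Units (ring_mat TYPE(complex) n undefined)"
    by (rule det_non_zero_imp_unit[OF AMc det])
  obtain Binv where mi: "mat_inverse ?AM = Some Binv"
  proof (cases "mat_inverse ?AM")
    case None
    then show ?thesis using mat_inverse(1)[OF AMc None, of undefined] unit by blast
  next
    case (Some a) then show ?thesis using that by simp
  qed
  have Bp: "?AM * Binv = 1\<^sub>m n" "Binv * ?AM = 1\<^sub>m n" "Binv \<in> carrier_mat n n"
    using mat_inverse(2)[OF AMc mi] by auto
  have invb: "vnorm (Binv *\<^sub>v w) \<le> vnorm w / \<delta>" if w: "w \<in> carrier_vec n" for w
  proof -
    define z where "z = Binv *\<^sub>v w"
    have z: "z \<in> carrier_vec n" unfolding z_def using Bp(3) by (intro carrier_vecI) simp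
    have Az: "?AM *\<^sub>v z = w"
      unfolding z_def using assoc_mult_mat_vec[OF AMc Bp(3) w, symmetric] Bp(1) w by simp
    have "\<delta> * sqn z \<le> Re (cip z (?AM *\<^sub>v z))" by (rule LB[OF gM lower z])
    also have "\<dots> \<le> cmod (cip z w)" unfolding Az by (rule complex_Re_le_cmod)
    also have "\<dots> \<le> vnorm z * vnorm w" by (rule CS) (use z w in simp)
    finally have "\<delta> * (vnorm z * vnorm z) \<le> vnorm w * vnorm z"
      using vnorm_sq[of z] by (simp add: power2_eq_square mult_ac)
    then have "\<delta> * vnorm z \<le> vnorm w"
    proof (cases "vnorm z = 0")
      case True then show ?thesis using vnorm_nonneg[of w] by simp
    next
      case False
      then have "0 < vnorm z" using vnorm_nonneg[of z] by linarith
      moreover assume "\<delta> * (vnorm z * vnorm z) \<le> vnorm w * vnorm z"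
      ultimately show ?thesis using mult_right_le_imp_le[of "\<delta> * vnorm z" "vnorm z" "vnorm w"] by (simp add: mult_ac)
    qed
    then show ?thesis unfolding z_def[symmetric] using dpos by (simp add: field_simps)
  qed
  let ?E = "Binv * ?Y * ?Af - ?Y * ?At"
  have Ec: "?E \<in> carrier_mat n n" using Bp(3) by (intro minus_carrier_mat mult_carrier_mat) auto
  have Ex: "vnorm (?E *\<^sub>v x) \<le> (B0 / \<delta> + 1) * vnorm x" if x: "x \<in> carrier_vec n" for x
  proof -
    have Afx: "?Af *\<^sub>v x \<in> carrier_vec n" by (rule carrier_vecI) simp
    have Atx: "?At *\<^sub>v x \<in> carrier_vec n" by (rule carrier_vecI) simp
    have YAfx: "?Y *\<^sub>v (?Af *\<^sub>v x) \<in> carrier_vec n" by (rule carrier_vecI) simp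
    have BYc: "Binv * ?Y \<in> carrier_mat n n" using Bp(3) by (intro mult_carrier_mat) auto
    have "?E *\<^sub>v x = (Binv * ?Y * ?Af) *\<^sub>v x - (?Y * ?At) *\<^sub>v x"
      by (rule minus_mult_distrib_mat_vec[OF _ _ x]) (use Bp(3) in \<open>intro mult_carrier_mat; auto\<close>)+
    also have "(Binv * ?Y * ?Af) *\<^sub>v x = Binv *\<^sub>v (?Y *\<^sub>v (?Af *\<^sub>v x))"
      using assoc_mult_mat_vec[OF BYc toeplitz_carrier x] assoc_mult_mat_vec[OF Bp(3) exch_carrier Afx] by simp
    also have "(?Y * ?At) *\<^sub>v x = ?Y *\<^sub>v (?At *\<^sub>v x)"
      by (rule assoc_mult_mat_vec[OF exch_carrier toeplitz_carrier x])
    finally have eq: "?E *\<^sub>v x = Binv *\<^sub>v (?Y *\<^sub>v (?Af *\<^sub>v x)) - ?Y *\<^sub>v (?At *\<^sub>v x)" .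
    have "vnorm (?E *\<^sub>v x) \<le> vnorm (Binv *\<^sub>v (?Y *\<^sub>v (?Af *\<^sub>v x))) + vnorm (?Y *\<^sub>v (?At *\<^sub>v x))"
      unfolding eq using Bp(3) by (intro vnorm_diff[where n=n]) auto
    also have "\<dots> \<le> vnorm (?Y *\<^sub>v (?Af *\<^sub>v x)) / \<delta> + vnorm (?At *\<^sub>v x)"
      using invb[OF YAfx] exch_vnorm[OF Atx] by simp
    also have "\<dots> = vnorm (?Af *\<^sub>v x) / \<delta> + vnorm (?At *\<^sub>v x)"
      using exch_vnorm[OF Afx] by simp
    also have "\<dots> \<le> (B0 * vnorm x) / \<delta> + 1 * vnorm x"
      using opbound[OF gf x] opbound[OF gT x] dpos by (intro add_mono divide_right_mono) auto
    also have "\<dots> = (B0 / \<delta> + 1) * vnorm x" by (simp add: field_simps)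
    finally show ?thesis .
  qed
  have "0 \<le> spec_norm ?E \<and> spec_norm ?E \<le> B0 / \<delta> + 1"
    by (rule spec_bound[OF Ec _ Ex]) (use B0 dpos in simp)
  then show ?thesis using mi by simp
qed


theorem theorem3p5:
  fixes f :: "real \<Rightarrow> complex" and \<delta> :: real
  assumes meas: "set_borel_measurable lborel {-pi..pi} f"
    and ess_bdd: "\<exists>B. AE t in lborel. t \<in> {-pi..pi} \<longrightarrow> cmod (f t) \<le> B"
    and real_coeffs: "\<forall>k. fourier_coeff f k \<in> \<real>"
    and delta_pos: "\<delta> > 0"
    and lower: "\<forall>t\<in>{-pi..pi}. \<delta> \<le> cmod (f t)"
  shows "(\<lambda>n. spec_norm
            (the (mat_inverse (toeplitz n (\<lambda>t. complex_of_real (cmod (f t)))))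
               * exchange n * toeplitz n f
             - exchange n * toeplitz n (\<lambda>t. f t / complex_of_real (cmod (f t)))))
           \<in> o(\<lambda>n. real n)
       \<and> (\<forall>n ev. eigenvalue (exchange n * toeplitz n (\<lambda>t. f t / complex_of_real (cmod (f t)))) ev
            \<longrightarrow> ev \<in> \<real> \<and> -1 \<le> Re ev \<and> Re ev \<le> 1)"
proof -
  obtain B where bd: "AE t in lborel. t \<in> S \<longrightarrow> cmod (f t) \<le> B" using ess_bdd by blast
  define B0 where "B0 = max B 0"
  have bd0: "AE t in lborel. t \<in> S \<longrightarrow> cmod (f t) \<le> B0"
    using bd by eventually_elim (auto simp: B0_def)
  have Gfm[measurable]: "Gt f \<in> borel_measurable lborel"
    using meas unfolding set_borel_measurable_def Gt_def[abs_def] .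
  have gf: "good f B0" unfolding good_def using Gfm bd0 by (simp add: B0_def)
  have GM: "Gt (\<lambda>t. complex_of_real (cmod (f t))) = (\<lambda>t. complex_of_real (cmod (Gt f t)))"
    by (rule ext) (simp add: Gt_def indicator_def)
  have gM: "good (\<lambda>t. complex_of_real (cmod (f t))) B0"
    unfolding good_def GM using bd0 by (auto simp: B0_def)
  have GT: "Gt (\<lambda>t. f t / complex_of_real (cmod (f t))) = (\<lambda>t. Gt f t / complex_of_real (cmod (Gt f t)))"
    by (rule ext) (simp add: Gt_def indicator_def)
  have gT: "good (\<lambda>t. f t / complex_of_real (cmod (f t))) 1"
    unfolding good_def GT by (auto simp: norm_divide)
  have realT: "\<forall>k. fourier_coeff (\<lambda>t. f t / complex_of_real (cmod (f t))) k \<in> \<real>"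
    using tilde_real[OF gf real_coeffs lower delta_pos] by blast
  define C where "C = B0 / \<delta> + 1"
  let ?s = "\<lambda>n. spec_norm
            (the (mat_inverse (toeplitz n (\<lambda>t. complex_of_real (cmod (f t)))))
               * exchange n * toeplitz n f
             - exchange n * toeplitz n (\<lambda>t. f t / complex_of_real (cmod (f t))))"
  have sb: "0 \<le> ?s n \<and> ?s n \<le> C" for n
    unfolding C_def by (rule main_bound[OF gf gM gT delta_pos lower])
  have "?s \<in> o(\<lambda>n. real n)"
  proof (rule smalloI_tendsto)
    show "((\<lambda>n. ?s n / real n) \<longlongrightarrow> 0) at_top"
    proof (rule Lim_null_comparison)
      show "\<forall>\<^sub>F n in at_top. norm (?s n / real n) \<le> C / real n"
        using sb by (intro always_eventually allI) (simp add: divide_right_mono)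
      show "((\<lambda>n. C / real n) \<longlongrightarrow> 0) at_top" by (rule lim_const_over_n)
    qed
    show "\<forall>\<^sub>F n in at_top. real n \<noteq> 0"
      by (rule eventually_mono[OF eventually_ge_at_top[of 1]]) simp
  qed
  moreover have "\<forall>n ev. eigenvalue (exchange n * toeplitz n (\<lambda>t. f t / complex_of_real (cmod (f t)))) ev
            \<longrightarrow> ev \<in> \<real> \<and> -1 \<le> Re ev \<and> Re ev \<le> 1"
    using eig[OF gT realT] by blast
  ultimately show ?thesis by blast
qed


end
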